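(* Let $\mathcal{H}$ be a real Hilbert space, $A:\mathcal{H}\rightrightarrows\mathcal{H}$ maximal monotone, $p\geq2$ an integer, and $\varphi(\lambda,x)=\lambda^{1/(p-1)}\|x-(I+\lambda A)^{-1}x\|$ for $\lambda>0$. Then for all $x\in\mathcal{H}$ and $0<\lambda_1\leq\lambda_2$, \[ \left(\tfrac{\lambda_2}{\lambda_1}\right)^{\frac1{p-1}}\varphi(\lambda_1,x)\leq\varphi(\lambda_2,x)\leq\left(\tfrac{\lambda_2}{\lambda_1}\right)^{\frac p{p-1}}\varphi(\lambda_1,x). \] In addition, for any fixed $\lambda>0$, $\varphi(\lambda,x)=0$ if and only if $0\in Ax$.
   Context: $(I+\lambda A)^{-1}$ is the resolvent of $A$ of index $\lambda$. *)

theory Defs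
  imports "HOL-Analysis.Analysis"
begin

definition monotone_op :: "('a::real_inner \<Rightarrow> 'a set) \<Rightarrow> bool" where
  "monotone_op A \<longleftrightarrow>
     (\<forall>x y u v. u \<in> A x \<longrightarrow> v \<in> A y \<longrightarrow> inner (x - y) (u - v) \<ge> 0)"

definition maximal_monotone :: "('a::real_inner \<Rightarrow> 'a set) \<Rightarrow> bool" where
  "maximal_monotone A \<longleftrightarrow> monotone_op A \<and>
     (\<forall>B. monotone_op B \<and> (\<forall>x. A x \<subseteq> B x) \<longrightarrow> B = A)"

text \<open>Resolvent (I + \<lambda>A)^{-1} x: the unique y with x \<in> y + \<lambda> A y.\<close>
definition resolvent :: "('a::real_inner \<Rightarrow> 'a set) \<Rightarrow> real \<Rightarrow> 'a \<Rightarrow> 'a" where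
  "resolvent A lam x = (THE y. \<exists>u \<in> A y. x = y + lam *\<^sub>R u)"

definition phi :: "('a::real_inner \<Rightarrow> 'a set) \<Rightarrow> nat \<Rightarrow> real \<Rightarrow> 'a \<Rightarrow> real" where
  "phi A p lam x = lam powr (1 / (real p - 1)) * norm (x - resolvent A lam x)"

end

theory Submission
  imports Defs
begin


definition ff :: "'a::real_inner \<times> 'a \<Rightarrow> 'a \<Rightarrow> real" where
  "ff g x = inner (x - fst g) (x + snd g)"
definition cc :: "'a::real_inner \<times> 'a \<Rightarrow> 'a" where
  "cc g = (1/2) *\<^sub>R (fst g - snd g)"
definition rr :: "'a::real_inner \<times> 'a \<Rightarrow> real" where
  "rr g = norm ((1/2) *\<^sub>R (fst g + snd g))"

lemma ff_ball: "ff g x = (norm (x - cc g))\<^sup>2 - (rr g)\<^sup>2"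
  unfolding ff_def cc_def rr_def power2_norm_eq_inner
  by (simp add: inner_diff_left inner_diff_right inner_add_left inner_add_right inner_commute algebra_simps)

lemma ff_le0_iff: "ff g x \<le> 0 \<longleftrightarrow> x \<in> cball (cc g) (rr g)"
proof -
  have "rr g \<ge> 0" by (simp add: rr_def)
  then show ?thesis unfolding ff_ball mem_cball dist_norm
    by (metis abs_of_nonneg diff_le_0_iff_le norm_ge_zero norm_minus_commute power2_le_iff_abs_le)
qed

lemma ff_shift: "ff g (x + t *\<^sub>R d) = ff g x + 2 * t * inner d (x - cc g) + t\<^sup>2 * inner d d"
  unfolding ff_def cc_def power2_eq_square
  by (simp add: inner_diff_left inner_diff_right inner_add_left inner_add_right inner_commute algebra_simps)

lemma continuous_ff: "continuous_on S (ff g)"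
  unfolding ff_def by (intro continuous_intros)

lemma continuous_Max_ff:
  assumes "finite F" "F \<noteq> {}"
  shows "continuous_on S (\<lambda>x. Max ((\<lambda>g. ff g x) ` F))"
  using assms
proof (induction F rule: finite_ne_induct)
  case (singleton g) then show ?case by (simp add: continuous_ff)
next
  case (insert g F)
  have eq: "(\<lambda>x. Max ((\<lambda>g. ff g x) ` insert g F)) = (\<lambda>x. max (ff g x) (Max ((\<lambda>g. ff g x) ` F)))"
    using insert by (auto simp: Max_insert)
  show ?case unfolding eq by (rule continuous_on_max[OF continuous_ff insert.IH])
qed

lemma closest_varineq:
  fixes K :: "'a::real_inner set"
  assumes "convex K" "p \<in> K" "k \<in> K" "\<forall>z\<in>K. norm (x - p) \<le> norm (x - z)"
  shows "inner (x - p) (k - p) \<le> 0"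
proof (rule ccontr)
  assume "\<not> ?thesis"
  then have pos: "inner (x - p) (k - p) > 0" by simp
  define a where "a = inner (x - p) (k - p)"
  define b where "b = inner (k - p) (k - p)"
  have bpos: "b > 0" using pos unfolding b_def
    by (metis inner_gt_zero_iff inner_zero_right less_irrefl)
  define s where "s = min 1 (a / b)"
  have s: "0 < s" "s \<le> 1" "s * b \<le> a" using pos bpos unfolding s_def a_def[symmetric]
    by (auto simp: min_def field_simps)
  have "p + s *\<^sub>R (k - p) \<in> K"
    using assms(1,2,3) s convexD_alt[of K p k s] by (simp add: algebra_simps)
  then have "norm (x - p) \<le> norm (x - (p + s *\<^sub>R (k - p)))" using assms(4) by blast
  then have "(norm (x - p))\<^sup>2 \<le> (norm (x - p - s *\<^sub>R (k - p)))\<^sup>2"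
    by (simp add: algebra_simps power_mono)
  also have "\<dots> = (norm (x - p))\<^sup>2 - 2 * s * a + s * s * b"
    unfolding power2_norm_eq_inner a_def b_def
    by (simp add: inner_diff_left inner_diff_right inner_commute algebra_simps)
  finally have "s * (s * b) \<ge> s * (2 * a)" by (simp add: algebra_simps)
  then have "s * b \<ge> 2 * a" using s by simp
  then show False using s pos a_def by linarith
qed



lemma weighted_ff_le0:
  fixes I :: "('a::real_inner \<times> 'a) set"
  assumes fin: "finite I" and nn: "\<forall>g\<in>I. 0 \<le> \<mu> g" and s1: "sum \<mu> I = 1"
    and mono: "\<forall>g\<in>I. \<forall>h\<in>I. inner (fst g - fst h) (snd g - snd h) \<ge> 0"
    and xdef: "x = (\<Sum>g\<in>I. \<mu> g *\<^sub>R cc g)"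
  shows "(\<Sum>g\<in>I. \<mu> g * ff g x) \<le> 0"
proof -
  define Y where "Y = (\<Sum>g\<in>I. \<mu> g *\<^sub>R fst g)"
  define V where "V = (\<Sum>g\<in>I. \<mu> g *\<^sub>R snd g)"
  define S where "S = (\<Sum>g\<in>I. \<mu> g * inner (fst g) (snd g))"
  have "x = (1/2) *\<^sub>R (\<Sum>g\<in>I. \<mu> g *\<^sub>R fst g - \<mu> g *\<^sub>R snd g)"
    unfolding xdef cc_def by (simp add: scaleR_sum_right algebra_simps)
  then have hx: "x = (1/2) *\<^sub>R (Y - V)" unfolding Y_def V_def by (simp add: sum_subtractf)
  have h1: "(\<Sum>g\<in>I. \<mu> g * ff g x) = inner x x + inner x V - inner Y x - S"
  proof -
    have "(\<Sum>g\<in>I. \<mu> g * ff g x) = (\<Sum>g\<in>I. \<mu> g * inner x x + \<mu> g * inner x (snd g)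
        - \<mu> g * inner (fst g) x - \<mu> g * inner (fst g) (snd g))"
      unfolding ff_def by (intro sum.cong) (auto simp: inner_diff_left inner_add_right algebra_simps)
    also have "\<dots> = inner x x * sum \<mu> I + (\<Sum>g\<in>I. \<mu> g * inner x (snd g))
        - (\<Sum>g\<in>I. \<mu> g * inner (fst g) x) - S"
      unfolding S_def by (simp add: sum_subtractf sum.distrib sum_distrib_right[symmetric] mult.commute)
    also have "\<dots> = inner x x + inner x V - inner Y x - S"
      unfolding V_def Y_def s1 by (simp add: inner_sum_left inner_sum_right)
    finally show ?thesis .
  qed
  have h2: "0 \<le> (\<Sum>g\<in>I. \<Sum>h\<in>I. \<mu> g * \<mu> h * inner (fst g - fst h) (snd g - snd h))"
    using nn mono by (intro sum_nonneg) auto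
  have a1: "(\<Sum>g\<in>I. \<Sum>h\<in>I. \<mu> g * \<mu> h * inner (fst g) (snd g)) = S"
    unfolding S_def by (simp add: sum_distrib_right[symmetric] sum_distrib_left[symmetric] s1 mult.commute mult.left_commute)
  have a2: "(\<Sum>g\<in>I. \<Sum>h\<in>I. \<mu> g * \<mu> h * inner (fst h) (snd h)) = S"
    unfolding S_def by (simp add: sum_distrib_left[symmetric] sum_distrib_right[symmetric] s1 mult.assoc)
  have a3: "(\<Sum>g\<in>I. \<Sum>h\<in>I. \<mu> g * \<mu> h * inner (fst g) (snd h)) = inner Y V"
  proof -
    have "inner Y V = (\<Sum>g\<in>I. \<mu> g * inner (fst g) V)" by (simp add: Y_def inner_sum_left)
    also have "\<dots> = (\<Sum>g\<in>I. \<Sum>h\<in>I. \<mu> g * \<mu> h * inner (fst g) (snd h))"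
      by (simp add: V_def inner_sum_right sum_distrib_left mult.assoc)
    finally show ?thesis by simp
  qed
  have a4: "(\<Sum>g\<in>I. \<Sum>h\<in>I. \<mu> g * \<mu> h * inner (fst h) (snd g)) = inner Y V"
  proof -
    have "(\<Sum>g\<in>I. \<Sum>h\<in>I. \<mu> g * \<mu> h * inner (fst h) (snd g))
        = (\<Sum>h\<in>I. \<Sum>g\<in>I. \<mu> g * \<mu> h * inner (fst h) (snd g))" by (rule sum.swap)
    also have "\<dots> = (\<Sum>g\<in>I. \<Sum>h\<in>I. \<mu> g * \<mu> h * inner (fst g) (snd h))"
      by (simp add: mult.commute)
    finally show ?thesis using a3 by simp
  qed
  have "(\<Sum>g\<in>I. \<Sum>h\<in>I. \<mu> g * \<mu> h * inner (fst g - fst h) (snd g - snd h))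
     = (\<Sum>g\<in>I. \<Sum>h\<in>I. \<mu> g * \<mu> h * inner (fst g) (snd g) - \<mu> g * \<mu> h * inner (fst g) (snd h)
          - \<mu> g * \<mu> h * inner (fst h) (snd g) + \<mu> g * \<mu> h * inner (fst h) (snd h))"
    by (intro sum.cong refl) (simp add: inner_diff_left inner_diff_right algebra_simps)
  also have "\<dots> = 2 * S - 2 * inner Y V"
    using a1 a2 a3 a4 by (simp add: sum.distrib sum_subtractf)
  finally have h3: "inner Y V \<le> S" using h2 by simp
  have h4: "inner x x + inner x V - inner Y x = -(1/4) * inner Y Y + (1/2) * inner Y V - (1/4) * inner V V"
    unfolding hx by (simp add: inner_diff_left inner_diff_right inner_commute algebra_simps)
  have h5: "0 \<le> inner (Y + V) (Y + V)" by simp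
  then have "0 \<le> inner Y Y + 2 * inner Y V + inner V V"
    by (simp add: inner_add_left inner_add_right inner_commute)
  then show ?thesis using h1 h3 h4 by linarith
qed



lemma finite_core:
  fixes F :: "('a::real_inner \<times> 'a) set"
  assumes fin: "finite F" and ne: "F \<noteq> {}"
    and mono: "\<forall>g\<in>F. \<forall>h\<in>F. inner (fst g - fst h) (snd g - snd h) \<ge> 0"
  shows "\<exists>x. \<forall>g\<in>F. ff g x \<le> 0"
proof -
  define C where "C = convex hull (cc ` F)"
  define M where "M = (\<lambda>x. Max ((\<lambda>g. ff g x) ` F))"
  have "compact C" using fin by (simp add: C_def finite_imp_compact_convex_hull)
  have "C \<noteq> {}" using ne by (simp add: C_def)
  have "convex C" by (simp add: C_def convex_convex_hull)
  obtain x where xC: "x \<in> C" and xmin: "\<forall>y\<in>C. M x \<le> M y"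
    using continuous_attains_inf[OF \<open>compact C\<close> \<open>C\<noteq>{}\<close> continuous_Max_ff[OF fin ne, of C]]
    unfolding M_def by blast
  define m where "m = M x"
  have le_m: "\<forall>g\<in>F. ff g x \<le> m" unfolding m_def M_def using fin by auto
  define I where "I = {g\<in>F. ff g x = m}"
  have "m \<in> (\<lambda>g. ff g x) ` F" unfolding m_def M_def using fin ne by (intro Max_in) auto
  then have "I \<noteq> {}" unfolding I_def by auto
  have finI: "finite I" and IF: "I \<subseteq> F" using fin by (auto simp: I_def)
  define K where "K = convex hull (cc ` I)"
  have "convex K" by (simp add: K_def convex_convex_hull)
  have "x \<in> K"
  proof (rule ccontr)
    assume "x \<notin> K"
    have "compact K" using finI by (simp add: K_def finite_imp_compact_convex_hull)
    have "K \<noteq> {}" using \<open>I \<noteq> {}\<close> by (simp add: K_def)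
    have "continuous_on K (\<lambda>z. norm (x - z))" by (intro continuous_intros)
    then obtain p where pK: "p \<in> K" and pmin: "\<forall>z\<in>K. norm (x - p) \<le> norm (x - z)"
      using continuous_attains_inf[OF \<open>compact K\<close> \<open>K\<noteq>{}\<close>] by blast
    have "p \<noteq> x" using \<open>x \<notin> K\<close> pK by auto
    define d where "d = p - x"
    have dpos: "inner d d > 0" using \<open>p \<noteq> x\<close> d_def by simp
    have act: "ff g (x + t *\<^sub>R d) < m" if "g \<in> I" "0 < t" "t < 1" for g t
    proof -
      have "cc g \<in> K" unfolding K_def using \<open>g \<in> I\<close> by (simp add: hull_inc)
      then have vi: "inner (x - p) (cc g - p) \<le> 0"
        by (rule closest_varineq[OF \<open>convex K\<close> pK _ pmin])
      have "inner d (x - cc g) = - inner d d + inner (x - p) (cc g - p)"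
        unfolding d_def by (simp add: inner_diff_left inner_diff_right inner_commute algebra_simps)
      then have "inner d (x - cc g) \<le> - inner d d" using vi by simp
      then have "2 * t * inner d (x - cc g) \<le> 2 * t * (- inner d d)"
        using \<open>0 < t\<close> by (intro mult_left_mono) auto
      moreover have "ff g x = m" using \<open>g \<in> I\<close> by (simp add: I_def)
      moreover have "t\<^sup>2 * inner d d < 2 * t * inner d d"
        using \<open>0 < t\<close> \<open>t < 1\<close> dpos by (simp add: power2_eq_square)
      ultimately show ?thesis unfolding ff_shift by linarith
    qed
    have inact: "\<forall>g\<in>F - I. eventually (\<lambda>t. ff g (x + t *\<^sub>R d) < m) (at_right 0)"
    proof
      fix g assume "g \<in> F - I"
      then have "ff g x < m" using le_m I_def by force
      have lim: "((\<lambda>t::real. x + t *\<^sub>R d) \<longlongrightarrow> x) (at_right 0)"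
        by (auto intro!: tendsto_eq_intros)
      then have "((\<lambda>t. ff g (x + t *\<^sub>R d)) \<longlongrightarrow> ff g x) (at_right 0)"
        unfolding ff_def by (intro tendsto_intros)
      then show "eventually (\<lambda>t. ff g (x + t *\<^sub>R d) < m) (at_right 0)"
        using order_tendstoD(2) \<open>ff g x < m\<close> by blast
    qed
    have "eventually (\<lambda>t. t \<in> {0<..<1}) (at_right (0::real))"
      by (rule eventually_at_right_real) simp
    moreover have "eventually (\<lambda>t. \<forall>g\<in>F - I. ff g (x + t *\<^sub>R d) < m) (at_right 0)"
      using fin inact by (intro eventually_ball_finite) auto
    ultimately have "eventually (\<lambda>t. t \<in> {0<..<1} \<and> (\<forall>g\<in>F - I. ff g (x + t *\<^sub>R d) < m)) (at_right (0::real))"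
      by (rule eventually_conj)
    then obtain t where t: "0 < t" "t < 1" "\<forall>g\<in>F - I. ff g (x + t *\<^sub>R d) < m"
      using eventually_happens[of _ "at_right (0::real)"] by auto
    have allF: "\<forall>g\<in>F. ff g (x + t *\<^sub>R d) < m"
      using act t by blast
    have "M (x + t *\<^sub>R d) < m" unfolding M_def using fin ne allF by simp
    moreover have "x + t *\<^sub>R d \<in> C"
    proof -
      have "p \<in> C" using pK IF unfolding K_def C_def by (meson hull_mono image_mono subsetD)
      then show ?thesis
        using convexD_alt[OF \<open>convex C\<close> xC \<open>p \<in> C\<close>, of t] t unfolding d_def
        by (simp add: algebra_simps)
    qed
    ultimately show False using xmin m_def by force
  qed
  have "\<Union>((\<lambda>g. {cc g}) ` I) = cc ` I" by auto
  then have "x \<in> convex hull (\<Union>((\<lambda>g. {cc g}) ` I))" using \<open>x \<in> K\<close> K_def by simp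
  then obtain \<mu> s where mu: "\<forall>g\<in>I. \<mu> g \<ge> 0" "sum \<mu> I = 1" "\<forall>g\<in>I. s g \<in> {cc g}"
      "x = (\<Sum>g\<in>I. \<mu> g *\<^sub>R s g)"
    unfolding convex_hull_finite_union[OF finI, of "\<lambda>g. {cc g}", simplified] by blast
  have xsum: "x = (\<Sum>g\<in>I. \<mu> g *\<^sub>R cc g)" using mu(3,4) by (auto intro!: sum.cong)
  have "(\<Sum>g\<in>I. \<mu> g * ff g x) = (\<Sum>g\<in>I. \<mu> g * m)" by (intro sum.cong) (auto simp: I_def)
  also have "\<dots> = m" using mu(2) by (simp add: sum_distrib_right[symmetric])
  finally have "m \<le> 0"
    using weighted_ff_le0[OF finI mu(1,2) _ xsum] mono IF by auto
  then show ?thesis using le_m by (intro exI[of _ x]) (meson order_trans)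
qed



lemma parallelogram_mid:
  fixes u w :: "'a::real_inner"
  shows "(norm (u - w))\<^sup>2 = 2 * (norm u)\<^sup>2 + 2 * (norm w)\<^sup>2 - 4 * (norm ((1/2) *\<^sub>R (u + w)))\<^sup>2"
  unfolding power2_norm_eq_inner
  by (simp add: inner_diff_left inner_diff_right inner_add_left inner_add_right inner_commute algebra_simps)

lemma key_arith:
  fixes d e s nu nw :: real
  assumes "0 \<le> d" "0 < e" "e \<le> 1" "0 \<le> s" "d - e < s" "0 \<le> nu" "0 \<le> nw" "nu < d + e" "nw < d + e"
  shows "2 * nu\<^sup>2 + 2 * nw\<^sup>2 - 4 * s\<^sup>2 \<le> 16 * e * (d + 1)"
proof -
  have "nu\<^sup>2 \<le> (d + e)\<^sup>2" using assms by (intro power_mono) auto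
  moreover have "nw\<^sup>2 \<le> (d + e)\<^sup>2" using assms by (intro power_mono) auto
  moreover have "(d + e)\<^sup>2 - s\<^sup>2 \<le> 4 * e * (d + 1)"
  proof (cases "d - e \<ge> 0")
    case True
    then have "(d - e)\<^sup>2 \<le> s\<^sup>2" using assms by (intro power_mono) auto
    moreover have "(d + e)\<^sup>2 - (d - e)\<^sup>2 = 4 * d * e" by (simp add: power2_eq_square algebra_simps)
    moreover have "4 * d * e \<le> 4 * e * (d + 1)" using assms by (simp add: algebra_simps)
    ultimately show ?thesis by linarith
  next
    case False
    then have "(d + e)\<^sup>2 \<le> (d + e) * (2 * e)" using assms unfolding power2_eq_square
      by (intro mult_left_mono) auto
    also have "\<dots> \<le> (d + 1) * (2 * e)" using assms by (intro mult_right_mono) auto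
    finally have h: "(d + e)\<^sup>2 \<le> 2 * (e * (d + 1))" by (simp add: algebra_simps)
    have "0 \<le> e * (d + 1)" using assms by simp
    moreover have "0 \<le> s\<^sup>2" by simp
    moreover have "4 * e * (d + 1) = 4 * (e * (d + 1))" by simp
    ultimately show ?thesis using h by linarith
  qed
  ultimately show ?thesis by linarith
qed



lemma infinite_core:
  fixes G :: "('a::{real_inner,complete_space} \<times> 'a) set"
  assumes mono: "\<forall>g\<in>G. \<forall>h\<in>G. inner (fst g - fst h) (snd g - snd h) \<ge> 0"
  shows "\<exists>x. \<forall>g\<in>G. ff g x \<le> 0"
proof (cases "G = {}")
  case True then show ?thesis by auto
next
  case False
  then obtain g0 where g0: "g0 \<in> G" by blast
  define T where "T F = {x. \<forall>g\<in>F. ff g x \<le> 0}" for F :: "('a \<times> 'a) set"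
  define Fam where "Fam = {F. finite F \<and> g0 \<in> F \<and> F \<subseteq> G}"
  define N where "N F = Inf (norm ` T F)" for F
  define R where "R = norm (cc g0) + rr g0"
  have T_ball: "T F = (\<Inter>g\<in>F. cball (cc g) (rr g))" for F
    unfolding T_def by (auto simp: ff_le0_iff simp del: mem_cball)
  have Tconv: "convex (T F)" for F by (simp add: T_ball convex_INT)
  have Tclosed: "closed (T F)" for F by (simp add: T_ball closed_INT)
  have Tanti: "F \<subseteq> F' \<Longrightarrow> T F' \<subseteq> T F" for F F' unfolding T_def by auto
  have Tne: "T F \<noteq> {}" if "F \<in> Fam" for F
  proof -
    have "finite F" "F \<noteq> {}" "F \<subseteq> G" using that by (auto simp: Fam_def)
    then obtain x where "\<forall>g\<in>F. ff g x \<le> 0" using finite_core[of F] mono by blast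
    then show ?thesis unfolding T_def by auto
  qed
  have Tbd: "norm z \<le> R" if "F \<in> Fam" "z \<in> T F" for F z
  proof -
    have "z \<in> cball (cc g0) (rr g0)" using that by (auto simp: Fam_def T_ball)
    then have "norm (cc g0 - z) \<le> rr g0" by (simp add: dist_norm)
    moreover have "norm z \<le> norm (cc g0) + norm (cc g0 - z)"
      by (metis add.commute norm_triangle_sub norm_minus_commute)
    ultimately show ?thesis unfolding R_def by linarith
  qed
  have bb: "bdd_below (norm ` T F)" for F by (rule bdd_belowI[of _ 0]) auto
  have N_le: "N F \<le> norm z" if "z \<in> T F" for F z
    unfolding N_def using that bb by (intro cInf_lower) auto
  have N_approx: "\<exists>z\<in>T F. norm z < N F + e" if "F \<in> Fam" "e > 0" for F e
  proof -
    have "Inf (norm ` T F) < N F + e" using that by (simp add: N_def)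
    then show ?thesis using cInf_less_iff[of "norm ` T F"] Tne[OF that(1)] bb by auto
  qed
  have N_nn: "0 \<le> N F" if "F \<in> Fam" for F
    unfolding N_def using Tne[OF that] by (intro cInf_greatest) auto
  have N_R: "N F \<le> R" if FF: "F \<in> Fam" for F
  proof -
    obtain z where "z \<in> T F" using Tne[OF FF] by blast
    then show ?thesis using N_le Tbd[OF FF] by (meson order_trans)
  qed
  have N_mono: "N F \<le> N F'" if "F' \<in> Fam" "F \<subseteq> F'" for F F'
    unfolding N_def[of F'] using Tne[OF that(1)] Tanti[OF that(2)] N_le
    by (intro cInf_greatest) auto
  define d where "d = Sup (N ` Fam)"
  have Fam_ne: "{g0} \<in> Fam" using g0 by (simp add: Fam_def)
  have ba: "bdd_above (N ` Fam)" using N_R by (intro bdd_aboveI[of _ R]) auto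
  have N_d: "N F \<le> d" if "F \<in> Fam" for F unfolding d_def using that ba by (intro cSup_upper) auto
  have d_nn: "0 \<le> d" using N_nn[OF Fam_ne] N_d[OF Fam_ne] by linarith
  have d_approx: "\<exists>F\<in>Fam. d - e < N F" if "e > 0" for e
  proof -
    have "d - e < Sup (N ` Fam)" using that by (simp add: d_def)
    then show ?thesis using less_cSup_iff[of "N ` Fam"] Fam_ne ba by auto
  qed
  have key: "(norm (u - w))\<^sup>2 \<le> 16 * e * (d + 1)"
    if "F \<in> Fam" "u \<in> T F" "w \<in> T F" "norm u < d + e" "norm w < d + e" "d - e < N F" "0 < e" "e \<le> 1"
    for F u w e
  proof -
    have "(1/2) *\<^sub>R (u + w) \<in> T F"
      using convexD[OF Tconv that(2) that(3), of "1/2" "1/2"] by (simp add: algebra_simps)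
    then have "N F \<le> norm ((1/2) *\<^sub>R (u + w))" by (rule N_le)
    then show ?thesis unfolding parallelogram_mid
      using key_arith[OF d_nn that(7,8) norm_ge_zero, of "norm ((1/2) *\<^sub>R (u + w))" "norm u" "norm w"]
        that by auto
  qed
  define \<delta> where "\<delta> n = inverse (real (Suc n))" for n
  have \<delta>pos: "0 < \<delta> n" for n by (simp add: \<delta>_def)
  have \<delta>le1: "\<delta> n \<le> 1" for n unfolding \<delta>_def by (rule inverse_le_1_iff[THEN iffD2]) auto
  have \<delta>anti: "n \<le> m \<Longrightarrow> \<delta> m \<le> \<delta> n" for n m by (simp add: \<delta>_def le_imp_inverse_le)
  have "\<forall>n. \<exists>F\<in>Fam. d - \<delta> n < N F" using d_approx \<delta>pos by blast
  then obtain Fs where Fs: "\<And>n. Fs n \<in> Fam" "\<And>n. d - \<delta> n < N (Fs n)" by metis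
  define H where "H n = \<Union>(Fs ` {..n})" for n
  have HFam: "H n \<in> Fam" for n
    using Fs(1) unfolding H_def Fam_def by auto
  have Hmono: "n \<le> m \<Longrightarrow> H n \<subseteq> H m" for n m unfolding H_def
    by (intro Union_mono image_mono) auto
  have NH: "d - \<delta> n < N (H n)" for n
    using Fs(2)[of n] N_mono[OF HFam, of "Fs n" n] unfolding H_def by fastforce
  have "\<forall>n. \<exists>z\<in>T (H n). norm z < N (H n) + \<delta> n" using N_approx HFam \<delta>pos by blast
  then obtain xs where xs: "\<And>n. xs n \<in> T (H n)" "\<And>n. norm (xs n) < N (H n) + \<delta> n" by metis
  have xs_d: "norm (xs n) < d + \<delta> n" for n using xs(2)[of n] N_d[OF HFam[of n]] by linarith
  define bnd where "bnd n = 16 * \<delta> n * (d + 1)" for n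
  have bnd_lim: "bnd \<longlonglongrightarrow> 0"
  proof -
    have "(\<lambda>n. 16 * \<delta> n * (d + 1)) \<longlonglongrightarrow> 16 * 0 * (d + 1)"
      unfolding \<delta>_def by (intro tendsto_intros LIMSEQ_inverse_real_of_nat)
    then show ?thesis unfolding bnd_def[abs_def] by simp
  qed
  have xs_close: "(norm (xs m - xs n))\<^sup>2 \<le> bnd n" if "n \<le> m" for n m
  proof -
    have "xs m \<in> T (H n)" using xs(1)[of m] Tanti[OF Hmono[OF that]] by blast
    moreover have "norm (xs m) < d + \<delta> n" using xs_d[of m] \<delta>anti[OF that] by linarith
    ultimately show ?thesis unfolding bnd_def
      using key[OF HFam _ xs(1)[of n] _ xs_d[of n] NH \<delta>pos \<delta>le1] by blast
  qed
  have sq_lt: "a < b" if "a\<^sup>2 \<le> c" "c < b\<^sup>2" "0 < b" for a b c :: real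
    using that by (meson le_less_trans less_le power2_less_imp_less)
  have "Cauchy xs"
  proof (rule metric_CauchyI)
    fix e :: real assume "e > 0"
    have "eventually (\<lambda>n. bnd n < (e/2)\<^sup>2) sequentially"
      using order_tendstoD(2)[OF bnd_lim] \<open>e > 0\<close> by simp
    then obtain M where M: "\<And>n. n \<ge> M \<Longrightarrow> bnd n < (e/2)\<^sup>2" by (auto simp: eventually_sequentially)
    have "dist (xs m) (xs M) < e/2" if "m \<ge> M" for m
      using sq_lt[OF xs_close[OF that] M[of M]] \<open>e > 0\<close> by (simp add: dist_norm)
    then have "\<forall>m\<ge>M. \<forall>n\<ge>M. dist (xs m) (xs n) < e"
      by (metis dist_commute dist_triangle_half_l)
    then show "\<exists>M. \<forall>m\<ge>M. \<forall>n\<ge>M. dist (xs m) (xs n) < e" by blast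
  qed
  then obtain x where xlim: "xs \<longlonglongrightarrow> x" using Cauchy_convergent_iff convergent_def by blast
  have "ff g x \<le> 0" if "g \<in> G" for g
  proof -
    have "x \<in> T {g}"
    proof (subst closed_approachable[OF Tclosed, symmetric], intro allI impI)
      fix \<epsilon> :: real assume "\<epsilon> > 0"
      have "eventually (\<lambda>n. bnd n < (\<epsilon>/2)\<^sup>2) sequentially"
        using order_tendstoD(2)[OF bnd_lim] \<open>\<epsilon> > 0\<close> by simp
      moreover have "eventually (\<lambda>n. dist (xs n) x < \<epsilon>/2) sequentially"
        using tendstoD[OF xlim, of "\<epsilon>/2"] \<open>\<epsilon> > 0\<close> by simp
      ultimately obtain n where n: "bnd n < (\<epsilon>/2)\<^sup>2" "dist (xs n) x < \<epsilon>/2"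
        using eventually_happens[of _ sequentially] by (metis (mono_tags, lifting) eventually_conj_iff sequentially_bot)
      define F' where "F' = insert g (H n)"
      have F'Fam: "F' \<in> Fam" using HFam[of n] that by (simp add: F'_def Fam_def)
      obtain z where z: "z \<in> T F'" "norm z < N F' + \<delta> n" using N_approx[OF F'Fam \<delta>pos] by blast
      have zd: "norm z < d + \<delta> n" using z(2) N_d[OF F'Fam] by linarith
      have zH: "z \<in> T (H n)" using z(1) Tanti[of "H n" F'] by (auto simp: F'_def)
      have zg: "z \<in> T {g}" using z(1) Tanti[of "{g}" F'] by (auto simp: F'_def)
      have "(norm (z - xs n))\<^sup>2 \<le> bnd n" unfolding bnd_def
        using key[OF HFam zH xs(1)[of n] zd xs_d[of n] NH \<delta>pos \<delta>le1] .
      then have "norm (z - xs n) < \<epsilon>/2" using sq_lt[OF _ n(1)] \<open>\<epsilon> > 0\<close> by simp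
      then have "dist z x < \<epsilon>" using n(2) dist_triangle[of z x "xs n"]
        by (simp add: dist_norm)
      then show "\<exists>y\<in>T {g}. dist y x < \<epsilon>" using zg by blast
    qed
    then show ?thesis by (simp add: T_def)
  qed
  then show ?thesis by blast
qed



lemma resolvent_exists:
  fixes A :: "'a::{real_inner, complete_space} \<Rightarrow> 'a set"
  assumes mm: "maximal_monotone A" and lam: "lam > 0"
  shows "\<exists>y. \<exists>u\<in>A y. z = y + lam *\<^sub>R u"
proof -
  have monA: "monotone_op A" using mm by (simp add: maximal_monotone_def)
  define G where "G = {(y - z, lam *\<^sub>R v) | y v. v \<in> A y}"
  have "\<forall>g\<in>G. \<forall>h\<in>G. inner (fst g - fst h) (snd g - snd h) \<ge> 0"
  proof (intro ballI)
    fix g h assume "g \<in> G" "h \<in> G"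
    then obtain y1 v1 y2 v2 where "g = (y1 - z, lam *\<^sub>R v1)" "v1 \<in> A y1"
      "h = (y2 - z, lam *\<^sub>R v2)" "v2 \<in> A y2" unfolding G_def by blast
    moreover have "inner (y1 - y2) (v1 - v2) \<ge> 0" using monA \<open>v1 \<in> A y1\<close> \<open>v2 \<in> A y2\<close>
      unfolding monotone_op_def by blast
    ultimately show "inner (fst g - fst h) (snd g - snd h) \<ge> 0" using lam
      by (simp add: scaleR_diff_right[symmetric])
  qed
  then obtain x' where x': "\<forall>g\<in>G. ff g x' \<le> 0" using infinite_core by blast
  define x where "x = x' + z"
  have rel: "inner (x - y) (x - z + lam *\<^sub>R v) \<le> 0" if "v \<in> A y" for y v
  proof -
    have "(y - z, lam *\<^sub>R v) \<in> G" using that unfolding G_def by blast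
    then have "ff (y - z, lam *\<^sub>R v) x' \<le> 0" using x' by blast
    then show ?thesis unfolding ff_def x_def by (simp add: algebra_simps)
  qed
  define w0 where "w0 = (1/lam) *\<^sub>R (z - x)"
  define B where "B = (\<lambda>w. A w \<union> (if w = x then {w0} else {}))"
  have rel2: "inner (x - a) (w0 - u) \<ge> 0" if "u \<in> A a" for a u
  proof -
    have "x - z + lam *\<^sub>R u = - (lam *\<^sub>R (w0 - u))" unfolding w0_def using lam
      by (simp add: algebra_simps)
    then have "inner (x - a) (lam *\<^sub>R (w0 - u)) \<ge> 0" using rel[OF that] by simp
    then show ?thesis using lam by (simp add: zero_le_mult_iff)
  qed
  have "monotone_op B"
    unfolding monotone_op_def
  proof (intro allI impI)
    fix a b u v assume u: "u \<in> B a" and v: "v \<in> B b"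
    show "inner (a - b) (u - v) \<ge> 0"
    proof (cases "u \<in> A a")
      case True
      show ?thesis
      proof (cases "v \<in> A b")
        case True
        with \<open>u \<in> A a\<close> monA show ?thesis unfolding monotone_op_def by blast
      next
        case False
        then have "b = x" "v = w0" using v by (auto simp: B_def split: if_splits)
        then show ?thesis using rel2[OF \<open>u \<in> A a\<close>]
          by (simp add: inner_diff_left inner_diff_right inner_commute)
      qed
    next
      case False
      then have ax: "a = x" "u = w0" using u by (auto simp: B_def split: if_splits)
      show ?thesis
      proof (cases "v \<in> A b")
        case True
        then show ?thesis using rel2[OF True] ax by simp
      next
        case False
        then have "b = x" "v = w0" using v by (auto simp: B_def split: if_splits)
        then show ?thesis using ax by simp
      qed
    qed
  qed
  moreover have "\<forall>w. A w \<subseteq> B w" by (auto simp: B_def)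
  ultimately have "B = A" using mm unfolding maximal_monotone_def by blast
  then have "w0 \<in> A x" by (metis B_def UnI2 singletonI)
  moreover have "z = x + lam *\<^sub>R w0" unfolding w0_def using lam by simp
  ultimately show ?thesis by blast
qed

lemma resolvent_unique:
  fixes A :: "'a::real_inner \<Rightarrow> 'a set"
  assumes monA: "monotone_op A" and lam: "lam > 0"
    and u1: "u1 \<in> A y1" and u2: "u2 \<in> A y2" and eq: "y1 + lam *\<^sub>R u1 = y2 + lam *\<^sub>R u2"
  shows "y1 = y2 \<and> u1 = u2"
proof -
  have "y1 - y2 = lam *\<^sub>R (u2 - u1)" using eq by (simp add: algebra_simps)
  moreover have "inner (y1 - y2) (u1 - u2) \<ge> 0" using monA u1 u2 unfolding monotone_op_def by blast
  ultimately have "lam * inner (u2 - u1) (u1 - u2) \<ge> 0" by simp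
  then have "inner (u2 - u1) (u1 - u2) \<ge> 0" using lam by (simp add: zero_le_mult_iff)
  then have "inner (u1 - u2) (u1 - u2) \<le> 0"
    by (metis inner_minus_left minus_diff_eq neg_0_le_iff_le)
  then have "u1 = u2" by (metis eq_iff_diff_eq_0 inner_gt_zero_iff not_le)
  then show ?thesis using eq by simp
qed

lemma resolvent_char:
  fixes A :: "'a::{real_inner, complete_space} \<Rightarrow> 'a set"
  assumes mm: "maximal_monotone A" and lam: "lam > 0"
  shows "\<exists>u\<in>A (resolvent A lam z). z = resolvent A lam z + lam *\<^sub>R u"
proof -
  have monA: "monotone_op A" using mm by (simp add: maximal_monotone_def)
  have "\<exists>!y. \<exists>u\<in>A y. z = y + lam *\<^sub>R u"
  proof (rule ex_ex1I)
    show "\<exists>y. \<exists>u\<in>A y. z = y + lam *\<^sub>R u" by (rule resolvent_exists[OF mm lam])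
  next
    fix y1 y2 assume "\<exists>u\<in>A y1. z = y1 + lam *\<^sub>R u" "\<exists>u\<in>A y2. z = y2 + lam *\<^sub>R u"
    then show "y1 = y2" using resolvent_unique[OF monA lam] by metis
  qed
  then show ?thesis unfolding resolvent_def by (rule theI')
qed

lemma resolvent_eq:
  fixes A :: "'a::{real_inner, complete_space} \<Rightarrow> 'a set"
  assumes mm: "maximal_monotone A" and lam: "lam > 0" and u: "u \<in> A y" and z: "z = y + lam *\<^sub>R u"
  shows "resolvent A lam z = y"
proof -
  have monA: "monotone_op A" using mm by (simp add: maximal_monotone_def)
  obtain u' where "u' \<in> A (resolvent A lam z)" "z = resolvent A lam z + lam *\<^sub>R u'"
    using resolvent_char[OF mm lam] by blast
  then show ?thesis using resolvent_unique[OF monA lam u] u z by metis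
qed



theorem lemma2p2:
  fixes A :: "'a::{real_inner, complete_space} \<Rightarrow> 'a set" and p :: nat
  assumes "maximal_monotone A" and "p \<ge> 2"
  shows "(\<forall>x lam1 lam2. 0 < lam1 \<and> lam1 \<le> lam2 \<longrightarrow>
            (lam2 / lam1) powr (1 / (real p - 1)) * phi A p lam1 x \<le> phi A p lam2 x \<and>
            phi A p lam2 x \<le> (lam2 / lam1) powr (real p / (real p - 1)) * phi A p lam1 x)
       \<and> (\<forall>lam x. 0 < lam \<longrightarrow> (phi A p lam x = 0 \<longleftrightarrow> 0 \<in> A x))"
proof (intro conjI allI impI)
  have mm: "maximal_monotone A" using assms(1) .
  have monA: "monotone_op A" using mm by (simp add: maximal_monotone_def)
  define q where "q = 1 / (real p - 1)"
  have p1: "real p - 1 > 0" using assms(2) by simp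
  have pq: "real p / (real p - 1) = q + 1" unfolding q_def using p1 by (simp add: field_simps)
  fix x :: 'a and lam1 lam2 :: real
  assume lams: "0 < lam1 \<and> lam1 \<le> lam2"
  then have l1: "0 < lam1" and l12: "lam1 \<le> lam2" and l2: "0 < lam2" by auto
  define J1 where "J1 = resolvent A lam1 x"
  define J2 where "J2 = resolvent A lam2 x"
  obtain u1 where u1: "u1 \<in> A J1" "x = J1 + lam1 *\<^sub>R u1"
    using resolvent_char[OF mm l1, of x] unfolding J1_def by blast
  obtain u2 where u2: "u2 \<in> A J2" "x = J2 + lam2 *\<^sub>R u2"
    using resolvent_char[OF mm l2, of x] unfolding J2_def by blast
  define a where "a = norm u1"
  define b where "b = norm u2"
  have a0: "a \<ge> 0" and b0: "b \<ge> 0" by (auto simp: a_def b_def)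
  have phi1: "phi A p lam1 x = lam1 powr q * (lam1 * a)"
  proof -
    have "x - J1 = lam1 *\<^sub>R u1" using u1(2) by simp
    then show ?thesis unfolding phi_def q_def J1_def[symmetric] a_def using l1 by simp
  qed
  have phi2: "phi A p lam2 x = lam2 powr q * (lam2 * b)"
  proof -
    have "x - J2 = lam2 *\<^sub>R u2" using u2(2) by simp
    then show ?thesis unfolding phi_def q_def J2_def[symmetric] b_def using l2 by simp
  qed
  have "inner (J1 - J2) (u1 - u2) \<ge> 0" using monA u1(1) u2(1) unfolding monotone_op_def by blast
  moreover have "J1 - J2 = lam2 *\<^sub>R u2 - lam1 *\<^sub>R u1" using u1(2) u2(2) by (simp add: algebra_simps)
  ultimately have "inner (lam2 *\<^sub>R u2 - lam1 *\<^sub>R u1) (u1 - u2) \<ge> 0" by simp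
  then have "(lam1 + lam2) * inner u1 u2 - lam2 * inner u2 u2 - lam1 * inner u1 u1 \<ge> 0"
    by (simp add: inner_diff_left inner_diff_right inner_commute algebra_simps)
  moreover have "inner u1 u1 = a\<^sup>2" "inner u2 u2 = b\<^sup>2" by (simp_all add: a_def b_def power2_norm_eq_inner)
  ultimately have hh: "(lam1 + lam2) * inner u1 u2 - lam2 * b\<^sup>2 - lam1 * a\<^sup>2 \<ge> 0" by simp
  have "inner u1 u2 \<le> a * b" unfolding a_def b_def by (rule norm_cauchy_schwarz)
  have "(lam1 + lam2) * inner u1 u2 \<le> (lam1 + lam2) * (a * b)"
    using \<open>inner u1 u2 \<le> a * b\<close> l1 l2 by (intro mult_left_mono) auto
  then have "lam2 * b\<^sup>2 + lam1 * a\<^sup>2 \<le> (lam1 + lam2) * (a * b)"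
    using hh by linarith
  then have h: "(lam2 * b - lam1 * a) * (b - a) \<le> 0"
    by (simp add: power2_eq_square algebra_simps)
  have ba: "b \<le> a"
  proof (rule ccontr)
    assume "\<not> b \<le> a"
    then have "b - a > 0" by simp
    moreover have "lam1 * a < lam1 * b" using l1 \<open>\<not> b \<le> a\<close> by simp
    then have "lam2 * b - lam1 * a > 0"
      using mult_right_mono[OF l12 b0] by simp
    ultimately have "(lam2 * b - lam1 * a) * (b - a) > 0" by (rule mult_pos_pos[rotated])
    then show False using h by simp
  qed
  have ab: "lam1 * a \<le> lam2 * b"
  proof (rule ccontr)
    assume "\<not> lam1 * a \<le> lam2 * b"
    then have c1: "lam2 * b - lam1 * a < 0" by simp
    have "lam1 * b \<le> lam2 * b" using mult_right_mono[OF l12 b0] .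
    then have "lam1 * b < lam1 * a" using c1 by simp
    then have "b - a < 0" using l1 by simp
    then have "(lam2 * b - lam1 * a) * (b - a) > 0" using c1 by (simp add: mult_neg_neg)
    then show False using h by simp
  qed
  have rq: "(lam2 / lam1) powr q * lam1 powr q = lam2 powr q"
    using l1 l2 by (simp add: powr_divide)
  have lq: "lam2 powr q \<ge> 0" by simp
  show "(lam2 / lam1) powr (1 / (real p - 1)) * phi A p lam1 x \<le> phi A p lam2 x"
  proof -
    have "(lam2 / lam1) powr q * phi A p lam1 x = lam2 powr q * (lam1 * a)"
      unfolding phi1 rq[symmetric] by (simp add: mult.assoc)
    also have "\<dots> \<le> lam2 powr q * (lam2 * b)" using ab lq by (rule mult_left_mono)
    finally show ?thesis unfolding phi2 q_def .
  qed
  show "phi A p lam2 x \<le> (lam2 / lam1) powr (real p / (real p - 1)) * phi A p lam1 x"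
  proof -
    have "phi A p lam2 x \<le> lam2 powr q * (lam2 * a)"
      unfolding phi2 using ba l2 lq by (intro mult_left_mono) auto
    also have "\<dots> = (lam2 / lam1) powr (q + 1) * phi A p lam1 x"
      unfolding phi1 using l1 l2 rq[symmetric]
      by (simp add: powr_add field_simps)
    finally show ?thesis unfolding pq .
  qed
next
  have mm: "maximal_monotone A" using assms(1) .
  have monA: "monotone_op A" using mm by (simp add: maximal_monotone_def)
  fix lam :: real and x :: 'a
  assume lam: "0 < lam"
  define J where "J = resolvent A lam x"
  obtain u where u: "u \<in> A J" "x = J + lam *\<^sub>R u"
    using resolvent_char[OF mm lam, of x] unfolding J_def by blast
  have phiu: "phi A p lam x = lam powr (1 / (real p - 1)) * (lam * norm u)"
  proof -
    have "x - J = lam *\<^sub>R u" using u(2) by simp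
    then show ?thesis unfolding phi_def J_def[symmetric] using lam by simp
  qed
  show "phi A p lam x = 0 \<longleftrightarrow> 0 \<in> A x"
  proof
    assume "phi A p lam x = 0"
    then have "u = 0" unfolding phiu using lam by simp
    then show "0 \<in> A x" using u by simp
  next
    assume "0 \<in> A x"
    then have "resolvent A lam x = x" using resolvent_eq[OF mm lam, of 0 x x] by simp
    then show "phi A p lam x = 0" unfolding phi_def by simp
  qed
qed


end
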